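(* Let $g \in L^2(\mathbb{R}^d)$ be an arbitrary real-valued window function. If $\mathcal{L} \subseteq \mathbb{R}^{2d}$ satisfies $\mathcal{L} \subseteq \Lambda \times \mathbb{R}^d$ for some lattice $\Lambda \subseteq \mathbb{R}^d$, then the set $$\mathcal{N}_{\mathbb{R}}(g,\mathcal{L}) = \{ f \in L^2(\mathbb{R}^d, \mathbb{R}) : \exists h \in L^2(\mathbb{R}^d, \mathbb{R}) \text{ with } h \nsim f \text{ and } |V_gf(z)| = |V_gh(z)|\ \forall z\in\mathcal{L} \}$$ contains an infinite-dimensional cone.
   Context: $V_gf(x,\omega)=\int_{\mathbb{R}^d} f(t)\overline{g(t-x)}e^{-2\pi i \omega\cdot t}\,dt$ is the short-time Fourier transform. $L^2(\mathbb{R}^d,\mathbb{R})$ denotes the real-valued functions in $L^2(\mathbb{R}^d)$. For functions $f,h$, $f\sim h$ means there is $\nu\in\mathbb{C}$, $|\nu|=1$, with $f=\nu h$; $f\nsim h$ means this fails. A lattice in $\mathbb{R}^d$ is $A\mathbb{Z}^d$ with $A\in\mathrm{GL}_d(\mathbb{R})$. A cone in a vector space $V$ is a set $C$ with $\kappa C\subseteq C$ for all $\kappa>0$; it is infinite-dimensional if not contained in any finite-dimensional subspace. *)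

theory Defs
  imports "HOL-Analysis.Analysis"
begin

definition L2R :: "(real^'d \<Rightarrow> real) set" where
  "L2R = {f. f \<in> borel_measurable lebesgue \<and> integrable lebesgue (\<lambda>t. (f t)^2)}"

definition stft :: "(real^'d \<Rightarrow> complex) \<Rightarrow> (real^'d \<Rightarrow> complex) \<Rightarrow> (real^'d) \<times> (real^'d) \<Rightarrow> complex" where
  "stft g f z = (LINT t|lebesgue. f t * cnj (g (t - fst z)) * cis (- (2 * pi * (snd z \<bullet> t))))"

definition phase_equiv :: "(real^'d \<Rightarrow> complex) \<Rightarrow> (real^'d \<Rightarrow> complex) \<Rightarrow> bool" where
  "phase_equiv f h \<longleftrightarrow> (\<exists>\<nu>. cmod \<nu> = 1 \<and> (AE t in lebesgue. f t = \<nu> * h t))"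

definition is_lattice :: "(real^'d) set \<Rightarrow> bool" where
  "is_lattice \<Lambda> \<longleftrightarrow> (\<exists>A :: real^'d^'d. invertible A \<and>
       \<Lambda> = (\<lambda>k. A *v k) ` {k. \<forall>i. k $ i \<in> \<int>})"

definition N_R :: "(real^'d \<Rightarrow> real) \<Rightarrow> ((real^'d) \<times> (real^'d)) set \<Rightarrow> (real^'d \<Rightarrow> real) set" where
  "N_R g L = {f \<in> L2R. \<exists>h \<in> L2R.
      \<not> phase_equiv (\<lambda>t. complex_of_real (f t)) (\<lambda>t. complex_of_real (h t)) \<and>
      (\<forall>z\<in>L. cmod (stft (\<lambda>t. complex_of_real (g t)) (\<lambda>t. complex_of_real (f t)) z)
             = cmod (stft (\<lambda>t. complex_of_real (g t)) (\<lambda>t. complex_of_real (h t)) z))}"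

definition is_cone_fun :: "('a \<Rightarrow> real) set \<Rightarrow> bool" where
  "is_cone_fun C \<longleftrightarrow> (\<forall>f\<in>C. \<forall>\<kappa>::real. \<kappa> > 0 \<longrightarrow> (\<lambda>t. \<kappa> * f t) \<in> C)"

definition inf_dim_L2 :: "(real^'d \<Rightarrow> real) set \<Rightarrow> bool" where
  "inf_dim_L2 C \<longleftrightarrow> \<not> (\<exists>B. finite B \<and>
     (\<forall>f\<in>C. \<exists>c :: (real^'d \<Rightarrow> real) \<Rightarrow> real. AE t in lebesgue. f t = (\<Sum>b\<in>B. c b * b t)))"

end

theory Submission
  imports Defs
begin


lemma refl_affine:
  fixes a :: "'a::euclidean_space"
  shows "distr lebesgue lebesgue (\<lambda>x. a - x) = lebesgue"
    and "(\<lambda>x. a - x) \<in> lebesgue \<rightarrow>\<^sub>M lebesgue"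
proof -
  have eq: "(\<lambda>x. a + (\<Sum>j\<in>Basis. ((-1) * (x \<bullet> j)) *\<^sub>R j)) = (\<lambda>x::'a. a - x)"
  proof
    fix x :: 'a
    have "(\<Sum>j\<in>Basis. ((-1) * (x \<bullet> j)) *\<^sub>R j) = - (\<Sum>j\<in>Basis. (x \<bullet> j) *\<^sub>R j)"
      by (simp add: sum_negf[symmetric])
    then show "a + (\<Sum>j\<in>Basis. ((-1) * (x \<bullet> j)) *\<^sub>R j) = a - x"
      by (simp add: euclidean_representation)
  qed
  have "lebesgue = density (distr lebesgue lebesgue (\<lambda>x. a + (\<Sum>j\<in>Basis. ((-1) * (x \<bullet> j)) *\<^sub>R j))) (\<lambda>_. (\<Prod>j\<in>(Basis::'a set). \<bar>-1::real\<bar>))"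
    by (rule lebesgue_affine_euclidean) simp
  then show "distr lebesgue lebesgue (\<lambda>x. a - x) = lebesgue"
    unfolding eq by (simp add: density_1)
  have "(\<lambda>x. a + (\<Sum>j\<in>Basis. ((-1) * (x \<bullet> j)) *\<^sub>R j)) \<in> lebesgue \<rightarrow>\<^sub>M lebesgue"
    by (rule lebesgue_affine_measurable) simp
  then show "(\<lambda>x. a - x) \<in> lebesgue \<rightarrow>\<^sub>M lebesgue" unfolding eq .
qed

lemma meas_comp_affine:
  fixes f :: "'a::euclidean_space \<Rightarrow> 'b::euclidean_space"
  assumes "f \<in> borel_measurable lebesgue"
  shows "(\<lambda>x. f (a - x)) \<in> borel_measurable lebesgue"
    and "(\<lambda>x. f (x - a)) \<in> borel_measurable lebesgue"
    and "(\<lambda>x. f (- x)) \<in> borel_measurable lebesgue"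
  using borel_measurable_affine[OF assms, of "-1" a]
    borel_measurable_affine[OF assms, of "1" "-a"]
    borel_measurable_affine[OF assms, of "-1" 0]
  by (simp_all add: algebra_simps)

lemma integral_refl:
  fixes F :: "'a::euclidean_space \<Rightarrow> complex"
  assumes "F \<in> borel_measurable lebesgue"
  shows "integral\<^sup>L lebesgue F = (LINT x|lebesgue. F (a - x))"
proof -
  have "integral\<^sup>L lebesgue F = integral\<^sup>L (distr lebesgue lebesgue (\<lambda>x. a - x)) F"
    by (simp add: refl_affine)
  also have "\<dots> = (LINT x|lebesgue. F (a - x))"
    by (rule integral_distr[OF refl_affine(2) assms])
  finally show ?thesis .
qed

lemma null_refl:
  fixes S :: "'a::euclidean_space set"
  assumes "S \<in> null_sets lebesgue"
  shows "{x. a - x \<in> S} \<in> null_sets lebesgue"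
proof -
  have "(\<lambda>x. a - x) -` S \<inter> space lebesgue \<in> null_sets lebesgue"
    using assms refl_affine[of a]
    by (metis null_sets_distr_iff refl_affine(2) sets.Int_space_eq2 null_setsD2)
  then show ?thesis by (simp add: vimage_def)
qed



lemma homog_sol:
  fixes v :: "'k \<Rightarrow> 'i \<Rightarrow> real"
  assumes "finite K" "finite I" "card K < card I"
  shows "\<exists>a. (\<exists>i\<in>I. a i \<noteq> 0) \<and> (\<forall>k\<in>K. (\<Sum>i\<in>I. a i * v k i) = 0)"
  using assms
proof (induction K arbitrary: I v rule: finite_induct)
  case empty
  then obtain i where "i \<in> I" by fastforce
  then show ?case by (intro exI[of _ "\<lambda>_. 1"]) auto
next
  case (insert k K)
  show ?case
  proof (cases "\<forall>i\<in>I. v k i = 0")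
    case True
    from insert.IH[of I v] insert.prems insert.hyps obtain a where
      a: "\<exists>i\<in>I. a i \<noteq> 0" "\<forall>k\<in>K. (\<Sum>i\<in>I. a i * v k i) = 0" by auto
    show ?thesis using a True by (intro exI[of _ a]) auto
  next
    case False
    then obtain i0 where i0: "i0 \<in> I" "v k i0 \<noteq> 0" by auto
    define I' where "I' = I - {i0}"
    define v' where "v' k' i = v k' i - v k' i0 * v k i / v k i0" for k' i
    have cI': "card I' = card I - 1" using i0 insert.prems by (simp add: I'_def)
    have "card K < card I'" using insert.prems insert.hyps cI' by simp
    from insert.IH[of I' v'] this insert.prems obtain a' where
      a': "\<exists>i\<in>I'. a' i \<noteq> 0" "\<forall>k'\<in>K. (\<Sum>i\<in>I'. a' i * v' k' i) = 0" by (auto simp: I'_def)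
    define a where "a i = (if i = i0 then - (\<Sum>j\<in>I'. a' j * v k j) / v k i0 else a' i)" for i
    have split: "(\<Sum>i\<in>I. a i * u i) = a i0 * u i0 + (\<Sum>i\<in>I'. a' i * u i)" for u
    proof -
      have "(\<Sum>i\<in>I. a i * u i) = a i0 * u i0 + (\<Sum>i\<in>I'. a i * u i)"
        using i0 insert.prems by (simp add: I'_def sum.remove)
      moreover have "(\<Sum>i\<in>I'. a i * u i) = (\<Sum>i\<in>I'. a' i * u i)"
        by (rule sum.cong) (auto simp: a_def I'_def)
      ultimately show ?thesis by simp
    qed
    show ?thesis
    proof (intro exI[of _ a] conjI ballI)
      from a'(1) obtain i where "i \<in> I'" "a' i \<noteq> 0" by auto
      then show "\<exists>i\<in>I. a i \<noteq> 0" by (intro bexI[of _ i]) (auto simp: a_def I'_def)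
    next
      fix k' assume k': "k' \<in> insert k K"
      show "(\<Sum>i\<in>I. a i * v k' i) = 0"
      proof (cases "k' = k")
        case True
        have "a i0 * v k i0 = - (\<Sum>j\<in>I'. a' j * v k j)" using i0 by (simp add: a_def)
        then show ?thesis using True by (simp add: split[of "v k"])
      next
        case False
        then have "k' \<in> K" using k' by auto
        then have z: "(\<Sum>i\<in>I'. a' i * v' k' i) = 0" using a'(2) by auto
        have "(\<Sum>i\<in>I'. a' i * v' k' i) = (\<Sum>i\<in>I'. a' i * v k' i) - (v k' i0 / v k i0) * (\<Sum>i\<in>I'. a' i * v k i)"
          by (simp add: v'_def sum_subtractf sum_distrib_left algebra_simps)
        moreover have "a i0 * v k' i0 = - (v k' i0 / v k i0) * (\<Sum>i\<in>I'. a' i * v k i)"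
          by (simp add: a_def)
        ultimately show ?thesis using z by (simp add: split)
      qed
    qed
  qed
qed



lemma cont_meas:
  fixes f :: "'a::euclidean_space \<Rightarrow> 'b::euclidean_space"
  assumes "continuous_on UNIV f" shows "f \<in> borel_measurable lebesgue"
proof -
  have "f \<in> borel_measurable (lebesgue_on UNIV)"
    by (rule continuous_imp_measurable_on_sets_lebesgue[OF assms]) simp
  then show ?thesis by (simp add: lebesgue_on_UNIV_eq)
qed

lemma frac_meas: "(\<lambda>t::real^'d. frac (l \<bullet> t)) \<in> borel_measurable lebesgue"
proof -
  have b: "(\<lambda>x::real. x - real_of_int \<lfloor>x\<rfloor>) \<in> borel_measurable borel"
    using borel_measurable_real_floor by measurable
  have i: "(\<lambda>t::real^'d. l \<bullet> t) \<in> borel_measurable lebesgue"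
    by (rule cont_meas) (intro continuous_intros)
  have "(\<lambda>t. (\<lambda>x::real. x - real_of_int \<lfloor>x\<rfloor>) (l \<bullet> t)) \<in> borel_measurable lebesgue"
    by (rule measurable_compose[OF i b])
  then show ?thesis by (simp add: frac_def)
qed

lemma null_hyp:
  fixes l :: "real^'d"
  assumes "l \<noteq> 0" "countable S"
  shows "{t. l \<bullet> t \<in> S} \<in> null_sets lebesgue"
proof -
  have "{t. l \<bullet> t \<in> S} = (\<Union>s\<in>S. {t. l \<bullet> t = s})" by auto
  also have "\<dots> \<in> null_sets lebesgue"
    using assms by (intro null_sets_UN') (auto simp: negligible_iff_null_sets[symmetric] intro!: negligible_hyperplane)
  finally show ?thesis .
qed

lemma frac_sym: "frac (- x) = frac x \<Longrightarrow> x \<in> (\<lambda>k::int. of_int k / 2) ` UNIV"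
proof -
  assume h: "frac (- x) = frac x"
  show ?thesis
  proof (cases "x \<in> \<int>")
    case True
    then obtain k where "x = of_int k" by (auto elim: Ints_cases)
    then show ?thesis by (intro image_eqI[of _ _ "2*k"]) auto
  next
    case False
    then have "frac x = 1/2" using h by (simp add: frac_neg)
    then have "x = (of_int (2 * \<lfloor>x\<rfloor> + 1)) / 2" unfolding frac_def by simp
    then show ?thesis by blast
  qed
qed

lemma exists_point:
  assumes "Z \<in> sets lebesgue" "Z \<notin> null_sets lebesgue" "AE t in lebesgue. P t"
  shows "\<exists>t\<in>Z. P t"
proof (rule ccontr)
  assume "\<not> ?thesis"
  then have "AE t in lebesgue. t \<notin> Z" using assms(3) by (auto intro: AE_mp)
  then have "{t \<in> space lebesgue. \<not> t \<notin> Z} \<in> null_sets lebesgue"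
    using assms(1) by (subst AE_iff_null[symmetric]) auto
  then show False using assms(2) by simp
qed



lemma L2R_prod:
  fixes phi :: "real^'d \<Rightarrow> real"
  assumes pm: "phi \<in> borel_measurable lebesgue" and pint: "integrable lebesgue (\<lambda>t. (phi t)^2)"
    and bm: "b \<in> borel_measurable lebesgue" and bb: "\<And>t. \<bar>b t\<bar> \<le> M"
  shows "(\<lambda>t. phi t * b t) \<in> L2R"
proof -
  have i1: "integrable lebesgue (\<lambda>t. M^2 * (phi t)^2)" using pint by simp
  have i2: "(\<lambda>t. (phi t * b t)^2) \<in> borel_measurable lebesgue" using pm bm by measurable
  have i3: "AE t in lebesgue. norm ((phi t * b t)^2) \<le> norm (M^2 * (phi t)^2)"
  proof (intro AE_I2)
    fix t
    have "\<bar>b t\<bar>^2 \<le> M^2" using bb[of t] by (intro power_mono) auto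
    then have "(b t)^2 * (phi t)^2 \<le> M^2 * (phi t)^2" by (intro mult_right_mono) auto
    then show "norm ((phi t * b t)^2) \<le> norm (M^2 * (phi t)^2)"
      by (simp add: power_mult_distrib algebra_simps)
  qed
  have "integrable lebesgue (\<lambda>t. (phi t * b t)^2)" by (rule Bochner_Integration.integrable_bound[OF i1 i2 i3])
  then show ?thesis unfolding L2R_def using pm bm by auto
qed

lemma main_gen:
  fixes phi :: "real^'d \<Rightarrow> real" and l :: "real^'d" and g :: "real^'d \<Rightarrow> real"
    and L :: "((real^'d) \<times> (real^'d)) set"
  assumes pm: "phi \<in> borel_measurable lebesgue" and pint: "integrable lebesgue (\<lambda>t. (phi t)^2)"
    and Zn: "{t. phi t \<noteq> 0} \<notin> null_sets lebesgue" and l0: "l \<noteq> 0"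
    and eq: "\<And>\<kappa> n z. \<kappa> > 0 \<Longrightarrow> n \<ge> 1 \<Longrightarrow> z \<in> L \<Longrightarrow>
       cmod (stft (\<lambda>t. complex_of_real (g t)) (\<lambda>t. complex_of_real (phi t * (\<kappa> * (1 + frac (l \<bullet> t))^n))) z)
     = cmod (stft (\<lambda>t. complex_of_real (g t)) (\<lambda>t. complex_of_real (phi t * (\<kappa> * (1 + frac (l \<bullet> (-t)))^n))) z)"
  shows "\<exists>C. is_cone_fun C \<and> inf_dim_L2 C \<and> C \<subseteq> N_R g L"
proof -
  define w where "w t = 1 + frac (l \<bullet> t)" for t
  have wm: "w \<in> borel_measurable lebesgue" unfolding w_def using frac_meas[of l] by measurable
  have wm': "(\<lambda>t. w (-t)) \<in> borel_measurable lebesgue"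
    unfolding w_def using frac_meas[of "-l"] by simp
  have wb: "1 \<le> w t" "w t < 2" for t unfolding w_def using frac_lt_1[of "l \<bullet> t"] by auto
  have "{t \<in> space lebesgue. phi t \<noteq> 0} \<in> sets lebesgue" using pm by measurable
  then have Zs: "{t. phi t \<noteq> 0} \<in> sets lebesgue" by simp
  define C where "C = {f. \<exists>\<kappa>>0. \<exists>n\<ge>1. f = (\<lambda>t. phi t * (\<kappa> * w t ^ n))}"
  have bnd: "\<bar>\<kappa> * w t ^ n\<bar> \<le> \<kappa> * 2 ^ n" if "\<kappa> > 0" for \<kappa> t n
  proof -
    have "w t ^ n \<le> 2 ^ n" using wb[of t] by (intro power_mono) auto
    then show ?thesis using that wb[of t] by (simp add: abs_mult)
  qed
  have bnd': "\<bar>\<kappa> * w (-t) ^ n\<bar> \<le> \<kappa> * 2 ^ n" if "\<kappa> > 0" for \<kappa> t n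
    using bnd[OF that] .
  have cone: "is_cone_fun C"
    unfolding is_cone_fun_def
  proof (intro ballI allI impI)
    fix f and k :: real assume f: "f \<in> C" and k: "k > 0"
    then obtain \<kappa> n where kn: "\<kappa> > 0" "n \<ge> 1" "f = (\<lambda>t. phi t * (\<kappa> * w t ^ n))"
      unfolding C_def by auto
    have "(\<lambda>t. k * f t) = (\<lambda>t. phi t * ((k * \<kappa>) * w t ^ n))"
      using kn by (auto simp: algebra_simps)
    then show "(\<lambda>t. k * f t) \<in> C" unfolding C_def using kn k by (auto intro!: exI[of _ "k * \<kappa>"])
  qed
  have noneq: "\<not> phase_equiv (\<lambda>t. complex_of_real (phi t * (\<kappa> * w t ^ n)))
                  (\<lambda>t. complex_of_real (phi t * (\<kappa> * w (-t) ^ n)))"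
    if k: "\<kappa> > 0" and n: "n \<ge> 1" for \<kappa> n
  proof
    assume "phase_equiv (\<lambda>t. complex_of_real (phi t * (\<kappa> * w t ^ n)))
                  (\<lambda>t. complex_of_real (phi t * (\<kappa> * w (-t) ^ n)))"
    then obtain \<nu> where nu: "cmod \<nu> = 1"
      and ae: "AE t in lebesgue. complex_of_real (phi t * (\<kappa> * w t ^ n)) = \<nu> * complex_of_real (phi t * (\<kappa> * w (-t) ^ n))"
      unfolding phase_equiv_def by auto
    define N1 where "N1 = {t. l \<bullet> t \<in> range (\<lambda>k::int. of_int k / 2)}"
    have "N1 \<in> null_sets lebesgue" unfolding N1_def using l0 by (intro null_hyp) auto
    then have "AE t in lebesgue. t \<notin> N1" by (rule AE_not_in)
    with ae have "AE t in lebesgue. t \<notin> N1 \<and> complex_of_real (phi t * (\<kappa> * w t ^ n)) = \<nu> * complex_of_real (phi t * (\<kappa> * w (-t) ^ n))"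
      by eventually_elim auto
    from exists_point[OF Zs Zn this] obtain t where t: "phi t \<noteq> 0" "t \<notin> N1"
      and e: "complex_of_real (phi t * (\<kappa> * w t ^ n)) = \<nu> * complex_of_real (phi t * (\<kappa> * w (-t) ^ n))"
      by auto
    have wne: "w t \<noteq> w (-t)"
    proof
      assume "w t = w (-t)"
      then have "frac (- (l \<bullet> t)) = frac (l \<bullet> t)" unfolding w_def by simp
      then have "l \<bullet> t \<in> range (\<lambda>k::int. of_int k / 2)" by (rule frac_sym)
      then show False using t(2) unfolding N1_def by auto
    qed
    have pos: "w t ^ n > 0" "w (-t) ^ n > 0" using wb[of t] wb[of "-t"] by auto
    from e have "complex_of_real (w t ^ n) = \<nu> * complex_of_real (w (-t) ^ n)"
      using t(1) k by (simp add: algebra_simps)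
    then have "cmod (complex_of_real (w t ^ n)) = cmod (complex_of_real (w (-t) ^ n))"
      using nu by (simp add: norm_mult del: of_real_power)
    then have "\<bar>w t ^ n\<bar> = \<bar>w (-t) ^ n\<bar>" by (simp only: norm_of_real)
    then have "w t ^ n = w (-t) ^ n" using pos by simp
    then have "w t = w (-t)"
      using pos wb[of t] wb[of "-t"] n by (metis power_eq_imp_eq_base less_le_trans zero_less_one less_imp_le not_one_le_zero le_less_trans zero_less_iff_neq_zero)
    then show False using wne by simp
  qed
  have sub: "C \<subseteq> N_R g L"
  proof
    fix f assume "f \<in> C"
    then obtain \<kappa> n where kn: "\<kappa> > 0" "n \<ge> 1" and f: "f = (\<lambda>t. phi t * (\<kappa> * w t ^ n))"
      unfolding C_def by auto
    have fL: "f \<in> L2R" unfolding f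
      by (rule L2R_prod[OF pm pint _ bnd[OF kn(1)]]) (use wm in measurable)
    have hL: "(\<lambda>t. phi t * (\<kappa> * w (-t) ^ n)) \<in> L2R"
      by (rule L2R_prod[OF pm pint _ bnd'[OF kn(1)]]) (use wm' in measurable)
    have ne: "\<not> phase_equiv (\<lambda>t. complex_of_real (f t)) (\<lambda>t. complex_of_real (phi t * (\<kappa> * w (-t) ^ n)))"
      using noneq[OF kn] unfolding f .
    have ee: "\<forall>z\<in>L. cmod (stft (\<lambda>t. complex_of_real (g t)) (\<lambda>t. complex_of_real (f t)) z) =
       cmod (stft (\<lambda>t. complex_of_real (g t)) (\<lambda>t. complex_of_real (phi t * (\<kappa> * w (-t) ^ n))) z)"
      using eq[OF kn] unfolding f w_def by blast
    show "f \<in> N_R g L"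
      unfolding N_R_def mem_Collect_eq
      by (intro conjI fL bexI[OF _ hL]) (use ne ee in auto)
  qed
  have inf: "inf_dim_L2 C"
    unfolding inf_dim_L2_def
  proof
    assume "\<exists>B. finite B \<and> (\<forall>f\<in>C. \<exists>c. AE t in lebesgue. f t = (\<Sum>b\<in>B. c b * b t))"
    then obtain B where B: "finite B" and Bc: "\<forall>f\<in>C. \<exists>c. AE t in lebesgue. f t = (\<Sum>b\<in>B. c b * b t)"
      by blast
    define m where "m = card B"
    define I where "I = {1..m+1}"
    define fn where "fn n = (\<lambda>t. phi t * (1 * w t ^ n))" for n
    have "\<forall>n\<in>I. \<exists>c. AE t in lebesgue. fn n t = (\<Sum>b\<in>B. c b * b t)"
    proof
      fix n assume "n \<in> I"
      then have "fn n \<in> C" unfolding C_def fn_def I_def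
        by (intro CollectI exI[of _ "1::real"] conjI exI[of _ n]) auto
      then show "\<exists>c. AE t in lebesgue. fn n t = (\<Sum>b\<in>B. c b * b t)" using Bc by blast
    qed
    from bchoice[OF this] obtain cc where cc: "\<forall>n\<in>I. AE t in lebesgue. fn n t = (\<Sum>b\<in>B. cc n b * b t)"
      by blast
    have aeall: "AE t in lebesgue. \<forall>n\<in>I. fn n t = (\<Sum>b\<in>B. cc n b * b t)"
      using cc by (subst AE_finite_all) (auto simp: I_def)
    obtain a where a1: "\<exists>i\<in>I. a i \<noteq> 0" and a2: "\<forall>b\<in>B. (\<Sum>n\<in>I. a n * cc n b) = 0"
      using homog_sol[of B I "\<lambda>b n. cc n b"] B by (auto simp: I_def m_def)
    define c where "c i = (if i \<in> I then a i else 0)" for i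
    have polyeq: "(\<Sum>i\<le>m+1. c i * x ^ i) = (\<Sum>n\<in>I. a n * x ^ n)" for x :: real
    proof -
      have "(\<Sum>i\<le>m+1. c i * x ^ i) = (\<Sum>i\<in>I. c i * x ^ i)"
        by (rule sum.mono_neutral_right) (auto simp: I_def c_def)
      also have "\<dots> = (\<Sum>n\<in>I. a n * x ^ n)" by (simp add: c_def)
      finally show ?thesis .
    qed
    define R where "R = {x::real. (\<Sum>i\<le>m+1. c i * x ^ i) = 0}"
    have Rfin: "finite R" unfolding R_def
      using a1 by (intro polyfun_rootbound_finite) (auto simp: c_def I_def)
    define N2 where "N2 = {t. l \<bullet> t \<in> (\<lambda>(r, k::int). r - 1 + of_int k) ` (R \<times> UNIV)}"
    have "countable (R \<times> (UNIV::int set))"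
      by (intro countable_SIGMA countable_finite[OF Rfin]) simp
    then have "N2 \<in> null_sets lebesgue" unfolding N2_def using l0
      by (intro null_hyp) auto
    then have "AE t in lebesgue. t \<notin> N2" by (rule AE_not_in)
    with aeall have "AE t in lebesgue. phi t = 0"
    proof eventually_elim
      case (elim t)
      have "phi t * (\<Sum>n\<in>I. a n * w t ^ n) = (\<Sum>n\<in>I. a n * fn n t)"
        by (simp add: fn_def sum_distrib_left algebra_simps)
      also have "\<dots> = (\<Sum>n\<in>I. a n * (\<Sum>b\<in>B. cc n b * b t))" using elim by simp
      also have "\<dots> = (\<Sum>b\<in>B. (\<Sum>n\<in>I. a n * cc n b) * b t)"
        by (simp add: sum_distrib_left sum_distrib_right algebra_simps sum.swap[of _ I B])
      also have "\<dots> = 0" using a2 by simp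
      finally have z: "phi t * (\<Sum>n\<in>I. a n * w t ^ n) = 0" .
      show "phi t = 0"
      proof (rule ccontr)
        assume "phi t \<noteq> 0"
        then have "w t \<in> R" using z polyeq unfolding R_def by simp
        then have "l \<bullet> t \<in> (\<lambda>(r, k::int). r - 1 + of_int k) ` (R \<times> UNIV)"
          unfolding w_def frac_def by (intro image_eqI[of _ _ "(w t, \<lfloor>l \<bullet> t\<rfloor>)"]) (auto simp: w_def frac_def)
        then show False using elim unfolding N2_def by auto
      qed
    qed
    then have "{t \<in> space lebesgue. \<not> phi t = 0} \<in> null_sets lebesgue"
      using Zs by (subst AE_iff_null[symmetric]) auto
    then show False using Zn by simp
  qed
  show ?thesis using cone inf sub by blast
qed



lemma stft_refl:
  fixes g a :: "real^'d \<Rightarrow> real" and lam om :: "real^'d"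
  assumes gm: "g \<in> borel_measurable lebesgue" and am: "a \<in> borel_measurable lebesgue"
    and per: "\<And>s. a (s - lam) = a s"
  shows "cmod (stft (\<lambda>t. complex_of_real (g t)) (\<lambda>t. complex_of_real (g (-t) * a t)) (lam, om))
       = cmod (stft (\<lambda>t. complex_of_real (g t)) (\<lambda>t. complex_of_real (g (-t) * a (-t))) (lam, om))"
proof -
  define F1 where "F1 t = complex_of_real (g (-t) * a t) * cnj (complex_of_real (g (t - lam))) * cis (- (2 * pi * (om \<bullet> t)))" for t
  define F2 where "F2 t = complex_of_real (g (-t) * a (-t)) * cnj (complex_of_real (g (t - lam))) * cis (- (2 * pi * (om \<bullet> t)))" for t
  have m1[measurable]: "(\<lambda>t. g (-t)) \<in> borel_measurable lebesgue" "(\<lambda>t. a (-t)) \<in> borel_measurable lebesgue"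
     "(\<lambda>t. g (t - lam)) \<in> borel_measurable lebesgue"
    using meas_comp_affine[OF gm] meas_comp_affine[OF am] by auto
  have "(\<lambda>t. cis (- (2 * pi * (om \<bullet> t)))) \<in> borel_measurable lebesgue"
  proof -
    have "continuous_on UNIV (\<lambda>t. cis (- (2 * pi * (om \<bullet> t))))"
      by (intro continuous_intros)
    then have "(\<lambda>t. cis (- (2 * pi * (om \<bullet> t)))) \<in> borel_measurable (lebesgue_on UNIV)"
      by (rule continuous_imp_measurable_on_sets_lebesgue) simp
    then show ?thesis by (simp add: lebesgue_on_UNIV_eq)
  qed
  note cm[measurable] = this
  have F2m: "F2 \<in> borel_measurable lebesgue"
    unfolding F2_def complex_cnj_complex_of_real using m1 by measurable
  have pt: "F2 (lam - s) = cis (- (2 * pi * (om \<bullet> lam))) * cnj (F1 s)" for s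
  proof -
    have "a (-(lam - s)) = a s" using per[of s] by (simp add: algebra_simps)
    moreover have "cis (- (2 * pi * (om \<bullet> (lam - s)))) = cis (- (2 * pi * (om \<bullet> lam))) * cis (2 * pi * (om \<bullet> s))"
      by (simp add: inner_diff_right cis_mult algebra_simps)
    ultimately show ?thesis
      unfolding F1_def F2_def by (simp add: algebra_simps cis_cnj)
  qed
  have "integral\<^sup>L lebesgue F2 = (LINT s|lebesgue. F2 (lam - s))"
    by (rule integral_refl[OF F2m])
  also have "\<dots> = cis (- (2 * pi * (om \<bullet> lam))) * cnj (integral\<^sup>L lebesgue F1)"
    by (simp add: pt integral_cnj[symmetric])
  finally have "integral\<^sup>L lebesgue F2 = cis (- (2 * pi * (om \<bullet> lam))) * cnj (integral\<^sup>L lebesgue F1)" .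
  then have "cmod (integral\<^sup>L lebesgue F2) = cmod (integral\<^sup>L lebesgue F1)"
    by (simp add: norm_mult)
  then show ?thesis unfolding stft_def F1_def F2_def by simp
qed



theorem theorem1p7:
  fixes g :: "real^'d \<Rightarrow> real"
    and L :: "((real^'d) \<times> (real^'d)) set"
    and \<Lambda> :: "(real^'d) set"
  assumes "g \<in> L2R"
    and "is_lattice \<Lambda>"
    and "L \<subseteq> \<Lambda> \<times> UNIV"
  shows "\<exists>C. is_cone_fun C \<and> inf_dim_L2 C \<and> C \<subseteq> N_R g L"
proof -
  have gm: "g \<in> borel_measurable lebesgue" and gi: "integrable lebesgue (\<lambda>t. (g t)^2)"
    using assms(1) unfolding L2R_def by auto
  obtain A :: "real^'d^'d" where Ainv: "invertible A"
    and Lam: "\<Lambda> = (\<lambda>k. A *v k) ` {k. \<forall>i. k $ i \<in> \<int>}"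
    using assms(2) unfolding is_lattice_def by blast
  obtain A' where A': "A' ** A = mat 1" using Ainv unfolding invertible_def by blast
  obtain i0 :: 'd where True by blast
  define l where "l = A' $ i0"
  have lk: "l \<bullet> (A *v k) = k $ i0" for k
  proof -
    have "l \<bullet> (A *v k) = (A' *v (A *v k)) $ i0" by (simp add: l_def matrix_vector_mul_component)
    also have "\<dots> = k $ i0" by (simp add: matrix_vector_mul_assoc A')
    finally show ?thesis .
  qed
  have l0: "l \<noteq> 0"
  proof
    assume "l = 0"
    then have "l \<bullet> (A *v axis i0 1) = 0" by simp
    then show False using lk[of "axis i0 1"] by (simp add: axis_def)
  qed
  have per: "frac (l \<bullet> (s - lam)) = frac (l \<bullet> s)" if lamL: "lam \<in> \<Lambda>" for s lam
  proof -
    obtain k where k: "\<forall>i. k $ i \<in> \<int>" "lam = A *v k" using lamL Lam by blast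
    obtain m where m: "k $ i0 = of_int m" using k(1) by (meson Ints_cases)
    have "l \<bullet> (s - lam) = l \<bullet> s + of_int (- m)" using lk[of k] k(2) m by (simp add: inner_diff_right)
    then show ?thesis by (simp only: frac_add_of_int_right)
  qed
  show ?thesis
  proof (cases "{t. g (-t) \<noteq> 0} \<in> null_sets lebesgue")
    case False
    have pm: "(\<lambda>t. g (-t)) \<in> borel_measurable lebesgue" using meas_comp_affine[OF gm] by simp
    have "(\<lambda>x. (g x)^2) \<in> borel_measurable lebesgue" using gm by measurable
    then have "integrable (distr lebesgue lebesgue (\<lambda>x. 0 - x)) (\<lambda>x. (g x)^2) \<longleftrightarrow> integrable lebesgue (\<lambda>x. (g (0 - x))^2)"
      by (rule integrable_distr_eq[OF refl_affine(2)])
    then have pint: "integrable lebesgue (\<lambda>t. (g (-t))^2)" using gi refl_affine(1)[of "0::real^'d"] by simp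
    show ?thesis
    proof (rule main_gen[OF pm pint False l0])
      fix \<kappa> :: real and n :: nat and z assume "\<kappa> > 0" "n \<ge> 1" "z \<in> L"
      then have lam: "fst z \<in> \<Lambda>" using assms(3) by auto
      have am: "(\<lambda>t. \<kappa> * (1 + frac (l \<bullet> t)) ^ n) \<in> borel_measurable lebesgue"
        using frac_meas[of l] by measurable
      have z: "z = (fst z, snd z)" by simp
      show "cmod (stft (\<lambda>t. complex_of_real (g t)) (\<lambda>t. complex_of_real (g (- t) * (\<kappa> * (1 + frac (l \<bullet> t)) ^ n))) z) =
            cmod (stft (\<lambda>t. complex_of_real (g t)) (\<lambda>t. complex_of_real (g (- t) * (\<kappa> * (1 + frac (l \<bullet> - t)) ^ n))) z)"
        using stft_refl[OF gm am, of "fst z" "snd z"] per[OF lam] by simp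
    qed
  next
    case True
    define phi :: "real^'d \<Rightarrow> real" where "phi = indicator (cbox 0 One)"
    have cs: "cbox 0 (One::real^'d) \<in> sets lebesgue" by simp
    have pm: "phi \<in> borel_measurable lebesgue" unfolding phi_def using cs by (rule borel_measurable_indicator)
    have "integrable lebesgue phi" unfolding phi_def
      by (rule integrable_real_indicator[OF cs]) (simp add: emeasure_lborel_cbox_finite)
    moreover have "(\<lambda>t. (phi t)^2) = phi" by (auto simp: phi_def indicator_def)
    ultimately have pint: "integrable lebesgue (\<lambda>t. (phi t)^2)" by simp
    have "{t. phi t \<noteq> 0} = cbox 0 One" by (auto simp: phi_def indicator_def)
    moreover have "cbox 0 (One::real^'d) \<notin> null_sets lebesgue"
      using negligible_interval(1)[of "0::real^'d" One] box01_nonempty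
      by (simp add: negligible_iff_null_sets)
    ultimately have Zn: "{t. phi t \<noteq> 0} \<notin> null_sets lebesgue" by simp
    have zero: "stft (\<lambda>t. complex_of_real (g t)) F z = 0" for F z
    proof -
      have "{t. fst z - t \<in> {t. g (-t) \<noteq> 0}} \<in> null_sets lebesgue" by (rule null_refl[OF True])
      then have "AE t in lebesgue. t \<notin> {t. fst z - t \<in> {t. g (-t) \<noteq> 0}}" by (rule AE_not_in)
      then have "AE t in lebesgue. F t * cnj (complex_of_real (g (t - fst z))) * cis (- (2 * pi * (snd z \<bullet> t))) = 0"
        by eventually_elim (simp add: algebra_simps)
      then show ?thesis unfolding stft_def by (rule integral_eq_zero_AE)
    qed
    show ?thesis
      by (rule main_gen[OF pm pint Zn l0]) (simp add: zero)
  qed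
qed


end
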